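(* Let $Y$ be a rate-one Yule process with $Y(0)=1$. For every $\delta\in(0,1/2)$ there exist positive constants $C_1,C_2,M_0$ (depending on $\delta$) such that for all $M\ge M_0$, $$\mathbb{P}\big(e^{-s}Y(s)\le e^{-\delta s}\text{ for some }s\ge M\big)\le C_1e^{-C_2M}.$$
   Context: A rate-one Yule process is a pure-birth continuous-time Markov chain on $\{1,2,\dots\}$ jumping from $k$ to $k+1$ at rate $k$. *)

theory Defs
  imports "HOL-Probability.Probability"
begin

text \<open>Holding-time construction of the rate-one Yule process started at Y(0) = 1:
  T k is the holding time in state k (exponential with rate k, k >= 1), all independent.\<close>

definition yule_holding_times :: "'a measure \<Rightarrow> (nat \<Rightarrow> 'a \<Rightarrow> real) \<Rightarrow> bool" where
  "yule_holding_times M T \<longleftrightarrow>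
     prob_space M \<and>
     prob_space.indep_vars M (\<lambda>_. borel) T {1..} \<and>
     (\<forall>k\<ge>1. distributed M lborel (T k) (exponential_density (real k)))"

definition yule_path :: "(nat \<Rightarrow> 'a \<Rightarrow> real) \<Rightarrow> 'a \<Rightarrow> real \<Rightarrow> nat" where
  "yule_path T \<omega> s = 1 + card {n::nat. 1 \<le> n \<and> (\<Sum>k=1..n. T k \<omega>) \<le> s}"

end

theory Submission
  imports Defs
begin


locale yule = prob_space P for P :: "'a measure" +
  fixes T :: "nat \<Rightarrow> 'a \<Rightarrow> real"
  assumes indep: "indep_vars (\<lambda>_. borel) T {1..}"
  and distr: "\<And>k. 1 \<le> k \<Longrightarrow> distributed P lborel (T k) (exponential_density (real k))"
begin

lemma T_meas: "1 \<le> k \<Longrightarrow> T k \<in> borel_measurable P"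
  using distributed_measurable[OF distr] by simp

definition "S n \<omega> = (\<Sum>k=1..n. T k \<omega>)"

lemma S_meas[measurable]: "S n \<in> borel_measurable P"
  unfolding S_def by (rule borel_measurable_sum) (auto intro: T_meas)

lemma mgf:
  assumes k: "1 \<le> k" and th: "\<theta> < real k"
  shows "(\<integral>\<^sup>+\<omega>. ennreal (exp (\<theta> * T k \<omega>)) \<partial>P) = ennreal (real k / (real k - \<theta>))"
proof -
  have "(\<integral>\<^sup>+\<omega>. ennreal (exp (\<theta> * T k \<omega>)) \<partial>P) =
      (\<integral>\<^sup>+x. ennreal (exponential_density (real k) x) * ennreal (exp (\<theta> * x)) \<partial>lborel)"
    by (rule distributed_nn_integral[OF distr[OF k], symmetric]) simp
  also have "\<dots> = (\<integral>\<^sup>+x. ennreal (real k / (real k - \<theta>)) * ennreal (exponential_density (real k - \<theta>) x) \<partial>lborel)"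
  proof (intro nn_integral_cong)
    fix x :: real
    have "exponential_density (real k) x * exp (\<theta> * x) = real k / (real k - \<theta>) * exponential_density (real k - \<theta>) x"
      using th by (auto simp: exponential_density_def field_simps simp flip: exp_add)
    then show "ennreal (exponential_density (real k) x) * ennreal (exp (\<theta> * x)) =
        ennreal (real k / (real k - \<theta>)) * ennreal (exponential_density (real k - \<theta>) x)"
      using th by (subst (1 2) ennreal_mult[symmetric]) (auto simp: exponential_density_def)
  qed
  also have "\<dots> = ennreal (real k / (real k - \<theta>)) * (\<integral>\<^sup>+x. ennreal (exponential_density (real k - \<theta>) x) \<partial>lborel)"
    by (rule nn_integral_cmult) simp
  also have "(\<integral>\<^sup>+x. ennreal (exponential_density (real k - \<theta>) x) \<partial>lborel) = 1"
  proof -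
    interpret E: prob_space "density lborel (exponential_density (real k - \<theta>))"
      using prob_space_exponential_density th by simp
    show ?thesis using E.emeasure_space_1 by (simp add: emeasure_density)
  qed
  finally show ?thesis by simp
qed

lemma mgf_S:
  assumes th: "\<theta> < 1"
  shows "(\<integral>\<^sup>+\<omega>. ennreal (exp (\<theta> * S n \<omega>)) \<partial>P) = ennreal (\<Prod>k=1..n. real k / (real k - \<theta>))"
proof -
  have "(\<integral>\<^sup>+\<omega>. ennreal (exp (\<theta> * S n \<omega>)) \<partial>P) = (\<integral>\<^sup>+\<omega>. (\<Prod>k\<in>{1..n}. ennreal (exp (\<theta> * T k \<omega>))) \<partial>P)"
    by (intro nn_integral_cong) (simp add: S_def sum_distrib_left exp_sum prod_ennreal)
  also have "\<dots> = (\<Prod>k\<in>{1..n}. \<integral>\<^sup>+\<omega>. ennreal (exp (\<theta> * T k \<omega>)) \<partial>P)"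
  proof (rule indep_vars_nn_integral)
    show "indep_vars (\<lambda>_. borel) (\<lambda>k \<omega>. ennreal (exp (\<theta> * T k \<omega>))) {1..n}"
      by (rule indep_vars_compose2[where X=T and M'="\<lambda>_. borel"])
         (auto intro: indep_vars_subset[OF indep])
  qed auto
  also have "\<dots> = (\<Prod>k\<in>{1..n}. ennreal (real k / (real k - \<theta>)))"
    by (intro prod.cong refl mgf) (use th in auto)
  also have "\<dots> = ennreal (\<Prod>k=1..n. real k / (real k - \<theta>))"
    using th by (intro prod_ennreal) auto
  finally show ?thesis .
qed

lemma markov:
  "emeasure P {\<omega>\<in>space P. c \<le> \<theta> * S n \<omega>} \<le> ennreal (exp (- c)) * (\<integral>\<^sup>+\<omega>. ennreal (exp (\<theta> * S n \<omega>)) \<partial>P)"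
proof -
  have "emeasure P {\<omega>\<in>space P. c \<le> \<theta> * S n \<omega>} = (\<integral>\<^sup>+\<omega>. indicator {\<omega>\<in>space P. c \<le> \<theta> * S n \<omega>} \<omega> \<partial>P)"
    by (rule nn_integral_indicator[symmetric]) measurable
  also have "\<dots> \<le> (\<integral>\<^sup>+\<omega>. ennreal (exp (- c)) * ennreal (exp (\<theta> * S n \<omega>)) \<partial>P)"
  proof (intro nn_integral_mono)
    fix \<omega>
    show "indicator {\<omega>\<in>space P. c \<le> \<theta> * S n \<omega>} \<omega> \<le> ennreal (exp (- c)) * ennreal (exp (\<theta> * S n \<omega>))"
    proof (cases "c \<le> \<theta> * S n \<omega>")
      case True
      then have "1 \<le> exp (- c) * exp (\<theta> * S n \<omega>)" by (simp flip: exp_add)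
      then show ?thesis by (auto simp: indicator_def simp flip: ennreal_mult)
    qed (auto simp: indicator_def)
  qed
  also have "\<dots> = ennreal (exp (- c)) * (\<integral>\<^sup>+\<omega>. ennreal (exp (\<theta> * S n \<omega>)) \<partial>P)"
    by (rule nn_integral_cmult) simp
  finally show ?thesis .
qed

definition "A s \<omega> = {n. 1 \<le> n \<and> S n \<omega> \<le> s}"

lemma yule_path_A: "yule_path T \<omega> s = 1 + card (A s \<omega>)"
  by (simp add: yule_path_def A_def S_def)

definition "Bad = {\<omega>\<in>space P. (\<exists>k\<ge>1. T k \<omega> < 0) \<or> (\<exists>j::nat. \<forall>n. S n \<omega> \<le> real j)}"

context
  fixes \<omega> assumes good: "\<omega> \<notin> Bad" "\<omega> \<in> space P"
begin

lemma good_nonneg: "1 \<le> k \<Longrightarrow> 0 \<le> T k \<omega>"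
  using good by (force simp: Bad_def)

lemma S_mono: "n \<le> n' \<Longrightarrow> S n \<omega> \<le> S n' \<omega>"
  unfolding S_def by (intro sum_mono2) (auto intro: good_nonneg)

lemma A_finite: "finite (A s \<omega>)"
proof (rule ccontr)
  assume inf: "infinite (A s \<omega>)"
  obtain j :: nat where j: "s \<le> real j" using real_arch_simple by blast
  have "\<forall>n. S n \<omega> \<le> real j"
  proof
    fix n
    obtain n' where "n' \<in> A s \<omega>" "n \<le> n'" using inf infinite_nat_iff_unbounded_le by blast
    then show "S n \<omega> \<le> real j" using S_mono[of n n'] j by (auto simp: A_def)
  qed
  then show False using good by (auto simp: Bad_def)
qed

lemma key:
  assumes d: "0 < \<delta>" "\<delta> < 1" and s: "0 \<le> s"
    and h: "exp (- s) * real (yule_path T \<omega> s) \<le> exp (- \<delta> * s)"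
  shows "real (nat \<lfloor>s\<rfloor>) < S (nat \<lfloor>exp ((1 - \<delta>) * (real (nat \<lfloor>s\<rfloor>) + 1))\<rfloor>) \<omega>"
proof -
  define j where "j = nat \<lfloor>s\<rfloor>"
  define x where "x = exp ((1 - \<delta>) * (real j + 1))"
  define m where "m = nat \<lfloor>x\<rfloor>"
  have js: "real j \<le> s" "s < real j + 1" using s by (auto simp: j_def)
  have "real (yule_path T \<omega> s) \<le> exp (- \<delta> * s) / exp (- s)"
    using h by (simp add: field_simps)
  also have "\<dots> = exp ((1 - \<delta>) * s)" by (simp add: algebra_simps flip: exp_diff)
  also have "\<dots> \<le> x" unfolding x_def using js d by simp
  finally have Yx: "real (yule_path T \<omega> s) \<le> x" .
  have "card (A (real j) \<omega>) \<le> card (A s \<omega>)"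
    by (intro card_mono A_finite) (use js in \<open>auto simp: A_def\<close>)
  then have "real (1 + card (A (real j) \<omega>)) \<le> x" using Yx yule_path_A[of \<omega> s] by simp
  then have cm: "1 + card (A (real j) \<omega>) \<le> m" unfolding m_def by (simp add: le_nat_floor)
  show ?thesis
  proof (rule ccontr)
    assume "\<not> ?thesis"
    then have Sm: "S m \<omega> \<le> real j" by (simp add: j_def x_def m_def)
    have "{1..m} \<subseteq> A (real j) \<omega>"
      using Sm S_mono by (force simp: A_def)
    then have "card {1..m} \<le> card (A (real j) \<omega>)" by (intro card_mono A_finite)
    then show False using cm by simp
  qed
qed

end

end

lemma prod_half_sq: "(\<Prod>k=1..n. real k / (real k - 1/2))^2 \<le> 4 * real n + (if n = 0 then 1 else 0)"
proof (induction n)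
  case 0 then show ?case by simp
next
  case (Suc n)
  define p where "p = (\<Prod>k=1..n. real k / (real k - 1/2))"
  have eq: "(\<Prod>k=1..Suc n. real k / (real k - 1/2)) = p * ((n+1) / (n + 1/2))"
    by (simp add: p_def prod.nat_ivl_Suc' field_simps)
  show ?case
  proof (cases "n = 0")
    case True then show ?thesis by (simp add: eq p_def)
  next
    case False
    have p2: "p^2 \<le> 4 * n" using Suc.IH False by (simp add: p_def)
    have "(p * ((n+1) / (n + 1/2)))^2 = p^2 * ((n+1) / (n + 1/2))^2" by (simp only: power_mult_distrib)
    also have "\<dots> \<le> (4 * n) * ((n+1) / (n + 1/2))^2" by (rule mult_right_mono[OF p2]) simp
    also have "\<dots> \<le> 4 * (n + 1)"
    proof -
      have "(4 * real n) * (real n + 1)^2 \<le> 4 * (real n + 1) * (real n + 1/2)^2"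
        by (simp add: power2_eq_square algebra_simps)
      moreover have "(4 * real n) * ((real n + 1) / (real n + 1/2))^2 = (4 * real n * (real n + 1)^2) / (real n + 1/2)^2"
        by (simp add: power_divide)
      moreover have d: "0 < (real n + 1/2)^2" by simp
      ultimately show ?thesis by (simp add: pos_divide_le_eq[OF d] add.commute)
    qed
    finally show ?thesis using eq by simp
  qed
qed

lemma prod_half: "(\<Prod>k=1..n. real k / (real k - 1/2)) \<le> 2 * sqrt (real n + 1)"
proof -
  have nn: "0 \<le> (\<Prod>k=1..n. real k / (real k - 1/2))" by (intro prod_nonneg) auto
  have "(\<Prod>k=1..n. real k / (real k - 1/2))^2 \<le> (2 * sqrt (real n + 1))^2"
    using prod_half_sq[of n] by (auto simp: power_mult_distrib split: if_splits)
  then show ?thesis by (rule power2_le_imp_le) simp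
qed

lemma prod_minus1: "(\<Prod>k=1..n. real k / (real k - -1)) = 1 / (real n + 1)"
proof (induction n)
  case (Suc n)
  have "(\<Prod>k=1..Suc n. real k / (real k - -1)) = (\<Prod>k=1..n. real k / (real k - -1)) * ((n+1) / (n+2))"
    by (simp add: prod.nat_ivl_Suc')
  also have "\<dots> = 1 / (real (Suc n) + 1)" using Suc.IH by (simp add: field_simps)
  finally show ?case .
qed simp


context yule begin

lemma N1_null: "{\<omega>\<in>space P. 1 \<le> k \<and> T k \<omega> < 0} \<in> null_sets P"
proof (cases "1 \<le> k")
  case True
  have eq: "{\<omega>\<in>space P. 1 \<le> k \<and> T k \<omega> < 0} = T k -` {..<0} \<inter> space P" using True by auto
  have "emeasure P (T k -` {..<0} \<inter> space P) = (\<integral>\<^sup>+x. ennreal (exponential_density (real k) x) * indicator {..<0} x \<partial>lborel)"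
    by (rule distributed_emeasure[OF distr[OF True]]) simp
  also have "\<dots> = (\<integral>\<^sup>+(x::real). 0 \<partial>lborel)"
    apply (rule nn_integral_cong) by (auto simp: indicator_def exponential_density_def)
  moreover have "T k -` {..<0} \<inter> space P \<in> sets P"
    using measurable_sets[OF T_meas[OF True], of "{..<0}"] by simp
  ultimately show ?thesis unfolding eq by (auto intro!: null_setsI)
qed simp

lemma N2_null: "{\<omega>\<in>space P. \<forall>n. S n \<omega> \<le> real j} \<in> null_sets P"
proof -
  let ?N = "{\<omega>\<in>space P. \<forall>n. S n \<omega> \<le> real j}"
  have Ns: "?N \<in> sets P" by measurable
  have le: "measure P ?N \<le> exp (real j) / (real n + 1)" for n
  proof -
    have "emeasure P ?N \<le> emeasure P {\<omega>\<in>space P. - real j \<le> -1 * S n \<omega>}"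
      by (intro emeasure_mono) auto
    also have "\<dots> \<le> ennreal (exp (- (- real j))) * ennreal (\<Prod>k=1..n. real k / (real k - -1))"
      using markov[of "- real j" "-1" n] mgf_S[of "-1" n] by simp
    also have "\<dots> = ennreal (exp (real j) / (real n + 1))"
      unfolding prod_minus1 by (simp add: ennreal_mult[symmetric])
    finally show ?thesis by (simp add: emeasure_eq_measure)
  qed
  have "measure P ?N \<le> 0"
  proof (rule ccontr)
    assume "\<not> ?thesis"
    then have pos: "0 < measure P ?N" by simp
    obtain n :: nat where n: "exp (real j) / measure P ?N < real n" using reals_Archimedean2 by blast
    then have "exp (real j) < real n * measure P ?N" using pos by (simp add: field_simps)
    also have "\<dots> \<le> (real n + 1) * measure P ?N" using pos by (simp add: mult_right_mono)
    finally have "exp (real j) / (real n + 1) < measure P ?N" by (simp add: field_simps)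
    then show False using le[of n] by simp
  qed
  then have "measure P ?N = 0" using measure_nonneg[of P ?N] by linarith
  then show ?thesis using Ns by (simp add: emeasure_eq_measure null_sets_def)
qed

lemma Bad_null: "Bad \<in> null_sets P"
proof -
  have "Bad = (\<Union>k. {\<omega>\<in>space P. 1 \<le> k \<and> T k \<omega> < 0}) \<union> (\<Union>j. {\<omega>\<in>space P. \<forall>n. S n \<omega> \<le> real j})"
    by (auto simp: Bad_def)
  also have "\<dots> \<in> null_sets P"
    by (intro null_sets.Un null_sets_UN N1_null N2_null)
  finally show ?thesis .
qed


lemma tail:
  assumes d: "0 < \<delta>" "\<delta> < 1"
  shows "emeasure P {\<omega>\<in>space P. real j < S (nat \<lfloor>exp ((1 - \<delta>) * (real j + 1))\<rfloor>) \<omega>}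
     \<le> ennreal (4 * exp (1/2) * exp (- \<delta> / 2) ^ j)"
proof -
  define x where "x = exp ((1 - \<delta>) * (real j + 1))"
  define m where "m = nat \<lfloor>x\<rfloor>"
  have x1: "1 \<le> x" unfolding x_def using d by simp
  have mx: "real m \<le> x" unfolding m_def using x1 by simp
  have "emeasure P {\<omega>\<in>space P. real j < S m \<omega>} \<le> emeasure P {\<omega>\<in>space P. real j / 2 \<le> 1/2 * S m \<omega>}"
    by (intro emeasure_mono) auto
  also have "\<dots> \<le> ennreal (exp (- (real j / 2))) * ennreal (\<Prod>k=1..m. real k / (real k - 1/2))"
    using markov[of "real j / 2" "1/2" m] mgf_S[of "1/2" m] by simp
  also have "\<dots> = ennreal (exp (- (real j / 2)) * (\<Prod>k=1..m. real k / (real k - 1/2)))"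
    by (rule ennreal_mult[symmetric]) (auto intro!: prod_nonneg)
  also have "\<dots> \<le> ennreal (4 * exp (1/2) * exp (- \<delta> / 2) ^ j)"
  proof (rule ennreal_leI)
    have sq: "sqrt x = exp ((1 - \<delta>) * (real j + 1) / 2)"
      unfolding x_def by (rule real_sqrt_unique) (simp_all add: power2_eq_square flip: exp_add)
    have "sqrt (real m + 1) \<le> sqrt (4 * x)" using mx x1 by simp
    also have "\<dots> = 2 * sqrt x" by (simp add: real_sqrt_mult)
    finally have s1: "sqrt (real m + 1) \<le> 2 * exp ((1 - \<delta>) * (real j + 1) / 2)" using sq by simp
    have "exp (- (real j / 2)) * (\<Prod>k=1..m. real k / (real k - 1/2)) \<le> exp (- (real j / 2)) * (2 * sqrt (real m + 1))"
      by (intro mult_left_mono prod_half) simp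
    also have "\<dots> \<le> exp (- (real j / 2)) * (2 * (2 * exp ((1 - \<delta>) * (real j + 1) / 2)))"
      using s1 by (intro mult_left_mono) simp_all
    also have "\<dots> = 4 * exp ((1 - \<delta>) / 2) * exp (real j * (- \<delta> / 2))"
      by (simp add: algebra_simps flip: exp_add) (simp add: field_simps)
    also have "\<dots> \<le> 4 * exp (1/2) * exp (real j * (- \<delta> / 2))"
      using d by simp
    also have "\<dots> = 4 * exp (1/2) * exp (- \<delta> / 2) ^ j" by (simp only: exp_of_nat_mult)
    finally show "exp (- (real j / 2)) * (\<Prod>k=1..m. real k / (real k - 1/2)) \<le> 4 * exp (1/2) * exp (- \<delta> / 2) ^ j" .
  qed
  finally show ?thesis by (simp add: x_def m_def)
qed

end


lemma card_measurable:
  assumes Q[measurable]: "\<And>n. Measurable.pred M (Q n)"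
  shows "(\<lambda>\<omega>. card {n::nat. Q n \<omega>}) \<in> measurable M (count_space UNIV)"
  unfolding measurable_count_space_eq2_countable
proof (intro conjI ballI)
  fix a :: nat
  have eq: "(\<lambda>\<omega>. card {n::nat. Q n \<omega>}) -` {a} \<inter> space M =
    {\<omega>\<in>space M. (a = 0 \<and> (\<forall>N. \<exists>n\<ge>N. Q n \<omega>)) \<or>
       (\<exists>N. (\<forall>n\<ge>N. \<not> Q n \<omega>) \<and> (\<Sum>n<N. if Q n \<omega> then 1 else (0::real)) = real a)}"
  proof -
    have "card {n::nat. Q n \<omega>} = a \<longleftrightarrow> ((a = 0 \<and> (\<forall>N. \<exists>n\<ge>N. Q n \<omega>)) \<or>
       (\<exists>N. (\<forall>n\<ge>N. \<not> Q n \<omega>) \<and> (\<Sum>n<N. if Q n \<omega> then 1 else (0::real)) = real a))" for \<omega>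
    proof -
      have sumeq: "(\<Sum>n<N. if Q n \<omega> then 1 else (0::real)) = real (card {n. n < N \<and> Q n \<omega>})" for N
      proof -
        have "(\<Sum>n<N. if Q n \<omega> then 1 else (0::real)) = (\<Sum>n\<in>{n\<in>{..<N}. Q n \<omega>}. 1)"
          by (rule sum.inter_filter[symmetric]) simp
        also have "\<dots> = real (card {n\<in>{..<N}. Q n \<omega>})" by simp
        also have "{n\<in>{..<N}. Q n \<omega>} = {n. n < N \<and> Q n \<omega>}" by auto
        finally show ?thesis .
      qed
      show ?thesis
      proof (cases "finite {n. Q n \<omega>}")
        case True
        then obtain N where N: "{n. Q n \<omega>} \<subseteq> {..<N}" using finite_nat_bounded by blast
        then have e1: "{n. Q n \<omega>} = {n. n < N \<and> Q n \<omega>}" by auto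
        have e2: "{n. Q n \<omega>} = {n. n < N' \<and> Q n \<omega>}" if "\<forall>n\<ge>N'. \<not> Q n \<omega>" for N'
          using that not_le by blast
        have ninf: "\<not> (\<forall>N. \<exists>n\<ge>N. Q n \<omega>)" using True infinite_nat_iff_unbounded_le[of "{n. Q n \<omega>}"] by auto
        show ?thesis
        proof
          show "card {n. Q n \<omega>} = a \<Longrightarrow> (a = 0 \<and> (\<forall>N. \<exists>n\<ge>N. Q n \<omega>)) \<or>
            (\<exists>N. (\<forall>n\<ge>N. \<not> Q n \<omega>) \<and> (\<Sum>n<N. if Q n \<omega> then 1 else (0::real)) = real a)"
          proof -
            assume ca: "card {n. Q n \<omega>} = a"
            have "(\<Sum>n<N. if Q n \<omega> then 1 else (0::real)) = real a" using sumeq[of N] e1 ca by simp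
            moreover have "\<forall>n\<ge>N. \<not> Q n \<omega>" using N by auto
            ultimately show ?thesis by blast
          qed
        next
          assume "(a = 0 \<and> (\<forall>N. \<exists>n\<ge>N. Q n \<omega>)) \<or>
            (\<exists>N. (\<forall>n\<ge>N. \<not> Q n \<omega>) \<and> (\<Sum>n<N. if Q n \<omega> then 1 else (0::real)) = real a)"
          then obtain N' where "\<forall>n\<ge>N'. \<not> Q n \<omega>" "(\<Sum>n<N'. if Q n \<omega> then 1 else (0::real)) = real a"
            using ninf by blast
          then show "card {n. Q n \<omega>} = a" using e2 sumeq[of N'] by simp
        qed
      next
        case False
        then have inf: "\<forall>N. \<exists>n\<ge>N. Q n \<omega>" using infinite_nat_iff_unbounded_le[of "{n. Q n \<omega>}"] by auto
        then show ?thesis using False by auto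
      qed
    qed
    then show ?thesis by auto
  qed
  show "(\<lambda>\<omega>. card {n::nat. Q n \<omega>}) -` {a} \<inter> space M \<in> sets M"
    unfolding eq
  proof -
    have f: "(\<lambda>\<omega>. \<Sum>n<N. if Q n \<omega> then 1 else (0::real)) \<in> borel_measurable M" for N
      by (intro borel_measurable_sum) measurable
    note f[measurable]
    have p1: "Measurable.pred M (\<lambda>\<omega>. \<forall>N::nat. \<exists>n\<ge>N. Q n \<omega>)"
      by measurable
    have p2: "Measurable.pred M (\<lambda>\<omega>. \<forall>n\<ge>N. \<not> Q n \<omega>)" for N :: nat
      by measurable
    have p3: "Measurable.pred M (\<lambda>\<omega>. (\<Sum>n<N. if Q n \<omega> then 1 else (0::real)) = real a)" for N
      by measurable
    note p1[measurable] p2[measurable] p3[measurable]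
    show "{\<omega>\<in>space M. (a = 0 \<and> (\<forall>N. \<exists>n\<ge>N. Q n \<omega>)) \<or>
       (\<exists>N. (\<forall>n\<ge>N. \<not> Q n \<omega>) \<and> (\<Sum>n<N. if Q n \<omega> then 1 else (0::real)) = real a)} \<in> sets M"
      by measurable
  qed
qed simp

lemma cond_iff: "exp (- (t::real)) * y \<le> exp (- \<delta> * t) \<longleftrightarrow> y \<le> exp ((1 - \<delta>) * t)"
proof -
  have "exp (- \<delta> * t) = exp (- t + (1 - \<delta>) * t)" by (simp add: algebra_simps)
  also have "\<dots> = exp (- t) * exp ((1 - \<delta>) * t)" by (rule exp_add)
  finally have e: "exp (- \<delta> * t) = exp (- t) * exp ((1 - \<delta>) * t)" .
  show ?thesis unfolding e by simp
qed


context yule begin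

lemma Y_meas[measurable]: "(\<lambda>\<omega>. real (yule_path T \<omega> x)) \<in> borel_measurable P"
proof -
  have p: "Measurable.pred P (\<lambda>\<omega>. 1 \<le> n \<and> S n \<omega> \<le> x)" for n
    by measurable
  have c: "(\<lambda>\<omega>. card {n. 1 \<le> n \<and> S n \<omega> \<le> x}) \<in> measurable P (count_space UNIV)"
    by (rule card_measurable[OF p])
  have e: "(\<lambda>\<omega>. real (yule_path T \<omega> x)) = (\<lambda>k. real (1 + k)) \<circ> (\<lambda>\<omega>. card {n. 1 \<le> n \<and> S n \<omega> \<le> x})"
    by (simp add: fun_eq_iff yule_path_A A_def)
  have r: "(\<lambda>k::nat. real (1 + k)) \<in> measurable (count_space UNIV) borel"
    by (rule measurable_count_space_eq1[THEN iffD2]) simp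
  show ?thesis unfolding e by (rule measurable_comp[OF c r])
qed

end


context yule begin

lemma rat_approx:
  assumes d: "0 < \<delta>" "\<delta> < 1" and s: "0 \<le> s"
    and h: "real (yule_path T \<omega> s) \<le> exp ((1 - \<delta>) * s)"
  shows "\<exists>r::rat. s \<le> real_of_rat r \<and> real (yule_path T \<omega> (real_of_rat r)) \<le> exp ((1 - \<delta>) * real_of_rat r)"
proof -
  have "\<exists>q\<in>\<rat>. s \<le> q \<and> real (yule_path T \<omega> q) \<le> exp ((1 - \<delta>) * q)"
  proof (cases "\<exists>s'>s. finite (A s' \<omega>)")
    case True
    then obtain s' where s': "s < s'" "finite (A s' \<omega>)" by blast
    define F where "F = A s' \<omega> - A s \<omega>"
    define D where "D = (\<lambda>n. S n \<omega> - s) ` F"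
    define \<epsilon> where "\<epsilon> = Min (insert (s' - s) D)"
    have fD: "finite D" using s' by (simp add: D_def F_def)
    have Dpos: "\<forall>d\<in>D. 0 < d" by (auto simp: D_def F_def A_def)
    have epos: "0 < \<epsilon>" unfolding \<epsilon>_def using fD Dpos s' by (subst Min_gr_iff) auto
    have e1: "\<epsilon> \<le> s' - s" unfolding \<epsilon>_def using fD by (intro Min_le) auto
    have e2: "\<epsilon> \<le> S n \<omega> - s" if "n \<in> F" for n
      unfolding \<epsilon>_def using fD that by (intro Min_le) (auto simp: D_def)
    obtain q where q: "q \<in> \<rat>" "s < q" "q < s + \<epsilon>" using Rats_dense_in_real[of s "s + \<epsilon>"] epos by auto
    have Aeq: "A q \<omega> = A s \<omega>"
    proof
      show "A s \<omega> \<subseteq> A q \<omega>" using q by (auto simp: A_def)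
      show "A q \<omega> \<subseteq> A s \<omega>"
      proof
        fix n assume n: "n \<in> A q \<omega>"
        show "n \<in> A s \<omega>"
        proof (rule ccontr)
          assume nn: "n \<notin> A s \<omega>"
          have "n \<in> A s' \<omega>" using n q e1 by (auto simp: A_def)
          then have "n \<in> F" using nn by (simp add: F_def)
          then have "\<epsilon> \<le> S n \<omega> - s" by (rule e2)
          then show False using n q by (auto simp: A_def)
        qed
      qed
    qed
    have "real (yule_path T \<omega> q) = real (yule_path T \<omega> s)" by (simp add: yule_path_A Aeq)
    also have "\<dots> \<le> exp ((1 - \<delta>) * s)" by (rule h)
    also have "\<dots> \<le> exp ((1 - \<delta>) * q)" using q d by simp
    finally have Yq: "real (yule_path T \<omega> q) \<le> exp ((1 - \<delta>) * q)" .
    show ?thesis using q(1) q(2) Yq less_imp_le by blast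
  next
    case False
    obtain q where q: "q \<in> \<rat>" "s < q" "q < s + 1" using Rats_dense_in_real[of s "s + 1"] by auto
    then have "infinite (A q \<omega>)" using False by auto
    then have "real (yule_path T \<omega> q) = 1" by (simp add: yule_path_A)
    also have "1 \<le> exp ((1 - \<delta>) * q)" using q d s by simp
    finally have Yq: "real (yule_path T \<omega> q) \<le> exp ((1 - \<delta>) * q)" .
    show ?thesis using q(1) q(2) Yq less_imp_le by blast
  qed
  then obtain q where q: "q \<in> \<rat>" "s \<le> q" "real (yule_path T \<omega> q) \<le> exp ((1 - \<delta>) * q)" by blast
  from q(1) obtain r where "q = real_of_rat r" by (auto elim: Rats_cases)
  then show ?thesis using q by blast
qed

lemma E_sets:
  assumes d: "0 < \<delta>" "\<delta> < 1" and M: "0 \<le> M"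
  shows "{\<omega> \<in> space P. \<exists>s \<ge> M. exp (- s) * real (yule_path T \<omega> s) \<le> exp (- \<delta> * s)} \<in> sets P"
proof -
  have "{\<omega> \<in> space P. \<exists>s \<ge> M. exp (- s) * real (yule_path T \<omega> s) \<le> exp (- \<delta> * s)} =
    {\<omega> \<in> space P. \<exists>r::rat. M \<le> real_of_rat r \<and> real (yule_path T \<omega> (real_of_rat r)) \<le> exp ((1 - \<delta>) * real_of_rat r)}"
  proof (intro Collect_cong conj_cong refl iffI)
    fix \<omega> assume "\<exists>s \<ge> M. exp (- s) * real (yule_path T \<omega> s) \<le> exp (- \<delta> * s)"
    then obtain s where s0: "M \<le> s" "exp (- s) * real (yule_path T \<omega> s) \<le> exp (- \<delta> * s)"
      by blast
    have s: "M \<le> s" "real (yule_path T \<omega> s) \<le> exp ((1 - \<delta>) * s)"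
      using s0 cond_iff by blast+
    then obtain r :: rat where "s \<le> real_of_rat r" "real (yule_path T \<omega> (real_of_rat r)) \<le> exp ((1 - \<delta>) * real_of_rat r)"
      using rat_approx[OF d _ s(2)] M by auto
    then show "\<exists>r::rat. M \<le> real_of_rat r \<and> real (yule_path T \<omega> (real_of_rat r)) \<le> exp ((1 - \<delta>) * real_of_rat r)"
      using s(1) by (intro exI[of _ r]) auto
  next
    fix \<omega> assume "\<exists>r::rat. M \<le> real_of_rat r \<and> real (yule_path T \<omega> (real_of_rat r)) \<le> exp ((1 - \<delta>) * real_of_rat r)"
    then obtain r :: rat where r: "M \<le> real_of_rat r" "real (yule_path T \<omega> (real_of_rat r)) \<le> exp ((1 - \<delta>) * real_of_rat r)"
      by blast
    have "exp (- real_of_rat r) * real (yule_path T \<omega> (real_of_rat r)) \<le> exp (- \<delta> * real_of_rat r)"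
      using r(2) cond_iff by blast
    then show "\<exists>s \<ge> M. exp (- s) * real (yule_path T \<omega> s) \<le> exp (- \<delta> * s)"
      using r(1) by blast
  qed
  also have "\<dots> \<in> sets P" by measurable
  finally show ?thesis .
qed

end


context yule begin

lemma main_bound:
  assumes d: "0 < \<delta>" "\<delta> < 1" and M: "1 \<le> M"
  shows "emeasure P {\<omega> \<in> space P. \<exists>s \<ge> M. exp (- s) * real (yule_path T \<omega> s) \<le> exp (- \<delta> * s)}
    \<le> ennreal (4 * exp (1/2) * exp (\<delta> / 2) / (1 - exp (- \<delta> / 2)) * exp (- (\<delta> / 2) * M))"
proof -
  define E where "E = {\<omega> \<in> space P. \<exists>s \<ge> M. exp (- s) * real (yule_path T \<omega> s) \<le> exp (- \<delta> * s)}"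
  define r where "r = exp (- \<delta> / 2)"
  define c where "c = 4 * exp (1/2::real)"
  define m where "m j = nat \<lfloor>exp ((1 - \<delta>) * (real j + 1))\<rfloor>" for j :: nat
  define B where "B j = {\<omega>\<in>space P. real j < S (m j) \<omega>}" for j
  define J where "J = nat \<lfloor>M\<rfloor>"
  have r01: "0 < r" "r < 1" using d by (auto simp: r_def)
  have Bs: "B j \<in> sets P" for j unfolding B_def by measurable
  have Bads: "Bad \<in> sets P" using Bad_null by auto
  have sub: "E \<subseteq> Bad \<union> (\<Union>i. B (i + J))"
  proof
    fix \<omega> assume "\<omega> \<in> E"
    then obtain s where sp: "\<omega> \<in> space P" and s: "M \<le> s" "exp (- s) * real (yule_path T \<omega> s) \<le> exp (- \<delta> * s)"
      by (auto simp: E_def)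
    show "\<omega> \<in> Bad \<union> (\<Union>i. B (i + J))"
    proof (cases "\<omega> \<in> Bad")
      case False
      have k: "real (nat \<lfloor>s\<rfloor>) < S (m (nat \<lfloor>s\<rfloor>)) \<omega>"
        unfolding m_def using key[OF False sp d _ s(2)] s M by simp
      have "J \<le> nat \<lfloor>s\<rfloor>" unfolding J_def using s by (intro nat_mono floor_mono) simp
      then have "\<omega> \<in> B ((nat \<lfloor>s\<rfloor> - J) + J)" using k sp by (simp add: B_def)
      then show ?thesis by blast
    qed simp
  qed
  have "emeasure P E \<le> emeasure P (Bad \<union> (\<Union>i. B (i + J)))"
    by (rule emeasure_mono[OF sub]) (use Bs Bads in auto)
  also have "\<dots> \<le> emeasure P Bad + emeasure P (\<Union>i. B (i + J))"
    by (rule emeasure_subadditive) (use Bs Bads in auto)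
  also have "emeasure P Bad = 0" using Bad_null by auto
  also have "emeasure P (\<Union>i. B (i + J)) \<le> (\<Sum>i. emeasure P (B (i + J)))"
    by (rule emeasure_subadditive_countably) (use Bs in auto)
  also have "\<dots> \<le> (\<Sum>i. ennreal (c * r ^ (i + J)))"
    by (intro suminf_le summableI) (unfold B_def m_def c_def r_def, rule tail[OF d])
  also have "(\<lambda>i. c * r ^ (i + J)) sums (c * r ^ J * (1 / (1 - r)))"
  proof -
    have "(\<lambda>i. r ^ i) sums (1 / (1 - r))" using geometric_sums[of r] r01 by simp
    from sums_mult[OF this, of "c * r ^ J"] show ?thesis by (simp add: power_add mult_ac)
  qed
  then have "(\<Sum>i. ennreal (c * r ^ (i + J))) = ennreal (c * r ^ J * (1 / (1 - r)))"
    using r01 by (subst suminf_ennreal2) (auto simp: c_def sums_iff)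
  also have "c * r ^ J * (1 / (1 - r)) \<le> 4 * exp (1/2) * exp (\<delta> / 2) / (1 - exp (- \<delta> / 2)) * exp (- (\<delta> / 2) * M)"
  proof -
    have "M - 1 \<le> real J" unfolding J_def using M by linarith
    then have "r ^ J \<le> exp ((M - 1) * (- \<delta> / 2))"
    proof -
      have h1: "(M - 1) * \<delta> \<le> real J * \<delta>" using \<open>M - 1 \<le> real J\<close> d by (intro mult_right_mono) auto
      have "exp (real J * (- \<delta> / 2)) \<le> exp ((M - 1) * (- \<delta> / 2))"
        using h1 by simp
      then show ?thesis unfolding r_def exp_of_nat_mult[symmetric] .
    qed
    also have "\<dots> = exp (\<delta> / 2) * exp (- (\<delta> / 2) * M)"
      by (simp add: field_simps flip: exp_add)
    finally have rJ: "r ^ J \<le> exp (\<delta> / 2) * exp (- (\<delta> / 2) * M)" .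
    have "c * r ^ J * (1 / (1 - r)) \<le> c * (exp (\<delta> / 2) * exp (- (\<delta> / 2) * M)) * (1 / (1 - r))"
      using rJ r01 by (intro mult_right_mono mult_left_mono) (auto simp: c_def)
    then show ?thesis by (simp add: c_def r_def field_simps)
  qed
  finally show ?thesis unfolding E_def by (simp add: ennreal_leI)
qed

end


theorem lemma5p12:
  fixes \<delta> :: real
  assumes "0 < \<delta>" and "\<delta> < 1/2"
  shows "\<exists>C1 C2 M0. C1 > 0 \<and> C2 > 0 \<and> M0 > 0 \<and>
     (\<forall>(P :: 'a measure) T. yule_holding_times P T \<longrightarrow>
        (\<forall>M \<ge> M0.
           let E = {\<omega> \<in> space P. \<exists>s \<ge> M. exp (- s) * real (yule_path T \<omega> s) \<le> exp (- \<delta> * s)}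
           in E \<in> sets P \<and> measure P E \<le> C1 * exp (- C2 * M)))"
proof -
  have d: "0 < \<delta>" "\<delta> < 1" using assms by auto
  define C1 where "C1 = 4 * exp (1/2) * exp (\<delta> / 2) / (1 - exp (- \<delta> / 2))"
  have r1: "exp (- \<delta> / 2) < 1" using d by simp
  have C1pos: "C1 > 0" unfolding C1_def using r1 by simp
  have main: "\<forall>(P :: 'a measure) T. yule_holding_times P T \<longrightarrow>
        (\<forall>M \<ge> 1.
           let E = {\<omega> \<in> space P. \<exists>s \<ge> M. exp (- s) * real (yule_path T \<omega> s) \<le> exp (- \<delta> * s)}
           in E \<in> sets P \<and> measure P E \<le> C1 * exp (- (\<delta> / 2) * M))"
  proof (intro allI impI)
    fix P :: "'a measure" and T M
    assume H: "yule_holding_times P T" and M: "1 \<le> (M::real)"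
    have "yule P T"
      using H unfolding yule_holding_times_def yule_def yule_axioms_def by auto
    then interpret Y: yule P T .
    define E where "E = {\<omega> \<in> space P. \<exists>s \<ge> M. exp (- s) * real (yule_path T \<omega> s) \<le> exp (- \<delta> * s)}"
    have Es: "E \<in> sets P" unfolding E_def using Y.E_sets[OF d, of M] M by simp
    have "ennreal (measure P E) = emeasure P E" by (simp add: Y.emeasure_eq_measure)
    also have "\<dots> \<le> ennreal (C1 * exp (- (\<delta> / 2) * M))"
      unfolding E_def C1_def by (rule Y.main_bound[OF d M])
    finally have "measure P E \<le> C1 * exp (- (\<delta> / 2) * M)"
      using C1pos by (subst (asm) ennreal_le_iff) auto
    then show "let E = {\<omega> \<in> space P. \<exists>s \<ge> M. exp (- s) * real (yule_path T \<omega> s) \<le> exp (- \<delta> * s)}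
           in E \<in> sets P \<and> measure P E \<le> C1 * exp (- (\<delta> / 2) * M)"
      using Es unfolding E_def Let_def by simp
  qed
  have d2: "0 < \<delta> / 2" using d by simp
  have o: "(0::real) < 1" by simp
  show ?thesis
    apply (rule exI[of _ C1], rule exI[of _ "\<delta> / 2"], rule exI[of _ "1::real"])
    using C1pos d2 o main by blast
qed

end
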